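(* If $\mathcal G$ is a projective Fraïssé family of connected finite graphs with confluent epimorphisms, then its projective Fraïssé limit is Kelley.
   Context: A graph is a pair $(V,E)$ with $E\subseteq V^2$ reflexive and symmetric; an epimorphism is a vertex map sending edges to edges and surjective on vertices and edges. A topological graph has a compact, zero-dimensional, second-countable (metrizable) vertex set and a closed edge set. A vertex set $S$ is disconnected if $S=P\cup Q$ with $P,Q$ nonempty disjoint closed and no edge between; otherwise connected; components are maximal connected subsets. An epimorphism $f$ is confluent if for each closed connected $Q$ in the target every component $K$ of $f^{-1}(Q)$ satisfies $f(K)=Q$. A topological graph $X$ with a compatible metric is Kelley if $X$ is connected and for every closed connected $K\subseteq X$, every vertex $p\in K$ and every sequence of vertices $p_n\to p$ there are closed connected sets $K_n$ with $p_n\in K_n$ and $K_n\to K$ in the Hausdorff metric. A projective Fraïssé family is a class of finite graphs with a fixed class of epimorphisms, countably many isomorphism types, closed under composition with identities, with the joint projection property and amalgamation property ($f\colon B\to A$, $g\colon C\to A$ fixed give $D$ and fixed $f_0,g_0$ with $f\circ f_0=g\circ g_0$). Its projective Fraïssé limit is the unique topological graph $\mathbb F=\varprojlim\{F_n,\alpha_n\}$ (members of the family, fixed bonding maps, edges coordinatewise) such that every member is an image of $\mathbb F$ under an admissible epimorphism and for admissible $f\colon\mathbb F\to A$ and fixed $g\colon B\to A$ there is admissible $h$ with $f=g\circ h$, admissible meaning $h'\circ\alpha^\infty_m$ with $h'$ fixed. *)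

theory Defs
  imports "HOL-Analysis.Analysis"
begin

type_synonym fgraph = "nat set \<times> (nat \<times> nat) set"

definition is_graph :: "'a set \<Rightarrow> ('a \<times> 'a) set \<Rightarrow> bool" where
  "is_graph V E \<longleftrightarrow> E \<subseteq> V \<times> V \<and> (\<forall>x\<in>V. (x, x) \<in> E) \<and> (\<forall>x y. (x, y) \<in> E \<longrightarrow> (y, x) \<in> E)"

definition epimorphism ::
  "'a set \<Rightarrow> ('a \<times> 'a) set \<Rightarrow> 'b set \<Rightarrow> ('b \<times> 'b) set \<Rightarrow> ('a \<Rightarrow> 'b) \<Rightarrow> bool" where
  "epimorphism VB EB VA EA f \<longleftrightarrow>
     f ` VB = VA \<and> (\<forall>(x, y) \<in> EB. (f x, f y) \<in> EA) \<and> EA \<subseteq> (\<lambda>(x, y). (f x, f y)) ` EB"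

definition graph_iso :: "fgraph \<Rightarrow> fgraph \<Rightarrow> bool" where
  "graph_iso A B \<longleftrightarrow> (\<exists>f. bij_betw f (fst A) (fst B) \<and>
     (\<forall>x\<in>fst A. \<forall>y\<in>fst A. (x, y) \<in> snd A \<longleftrightarrow> (f x, f y) \<in> snd B))"

text \<open>Graph-theoretic (dis)connectedness of a vertex set S w.r.t. edge set E;
  closedness is taken relative to S (for finite graphs everything is closed).\<close>
definition g_connected :: "('a::topological_space \<times> 'a) set \<Rightarrow> 'a set \<Rightarrow> bool" where
  "g_connected E S \<longleftrightarrow> \<not> (\<exists>P Q. P \<noteq> {} \<and> Q \<noteq> {} \<and> P \<inter> Q = {} \<and> S = P \<union> Q \<and>
      closedin (top_of_set S) P \<and> closedin (top_of_set S) Q \<and>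
      (\<forall>p\<in>P. \<forall>q\<in>Q. (p, q) \<notin> E))"

definition g_component :: "('a::topological_space \<times> 'a) set \<Rightarrow> 'a set \<Rightarrow> 'a set \<Rightarrow> bool" where
  "g_component E S K \<longleftrightarrow> K \<subseteq> S \<and> g_connected E K \<and>
     (\<forall>L. K \<subseteq> L \<and> L \<subseteq> S \<and> g_connected E L \<longrightarrow> L = K)"

definition confluent :: "fgraph \<Rightarrow> fgraph \<Rightarrow> (nat \<Rightarrow> nat) \<Rightarrow> bool" where
  "confluent B A f \<longleftrightarrow> epimorphism (fst B) (snd B) (fst A) (snd A) f \<and>
     (\<forall>Q. Q \<subseteq> fst A \<and> closed Q \<and> g_connected (snd A) Q \<longrightarrow>
        (\<forall>K. g_component (snd B) {x \<in> fst B. f x \<in> Q} K \<longrightarrow> f ` K = Q))"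

text \<open>A projective Fraisse family: a class G of finite graphs together with a class
  of fixed epimorphisms; M B A f means that f : B \<rightarrow> A is a fixed epimorphism.\<close>
definition proj_fraisse_family :: "fgraph set \<Rightarrow> (fgraph \<Rightarrow> fgraph \<Rightarrow> (nat \<Rightarrow> nat) \<Rightarrow> bool) \<Rightarrow> bool" where
  "proj_fraisse_family G M \<longleftrightarrow>
     (\<forall>A\<in>G. is_graph (fst A) (snd A) \<and> finite (fst A)) \<and>
     (\<forall>B A f. M B A f \<longrightarrow> B \<in> G \<and> A \<in> G \<and> epimorphism (fst B) (snd B) (fst A) (snd A) f) \<and>
     (\<exists>C. countable C \<and> C \<subseteq> G \<and> (\<forall>A\<in>G. \<exists>B\<in>C. graph_iso A B)) \<and>
     (\<forall>A\<in>G. M A A id) \<and>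
     (\<forall>A B C f g. M C B g \<and> M B A f \<longrightarrow> M C A (f \<circ> g)) \<and>
     (\<forall>A\<in>G. \<forall>B\<in>G. \<exists>C\<in>G. \<exists>f g. M C A f \<and> M C B g) \<and>
     (\<forall>A B C f g. M B A f \<and> M C A g \<longrightarrow>
        (\<exists>D\<in>G. \<exists>f0 g0. M D B f0 \<and> M D C g0 \<and> (\<forall>x\<in>fst D. f (f0 x) = g (g0 x))))"

text \<open>Inverse limit of a sequence Fs with bonding maps \<alpha> n : Fs (Suc n) \<rightarrow> Fs n,
  as a subspace of the product space nat \<Rightarrow> nat (product topology of discrete nat);
  edges are defined coordinatewise.\<close>
definition inv_lim_V :: "(nat \<Rightarrow> fgraph) \<Rightarrow> (nat \<Rightarrow> nat \<Rightarrow> nat) \<Rightarrow> (nat \<Rightarrow> nat) set" where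
  "inv_lim_V Fs \<alpha> = {x. \<forall>n. x n \<in> fst (Fs n) \<and> \<alpha> n (x (Suc n)) = x n}"

definition inv_lim_E :: "(nat \<Rightarrow> fgraph) \<Rightarrow> (nat \<Rightarrow> nat \<Rightarrow> nat) \<Rightarrow> ((nat \<Rightarrow> nat) \<times> (nat \<Rightarrow> nat)) set" where
  "inv_lim_E Fs \<alpha> = {(x, y). x \<in> inv_lim_V Fs \<alpha> \<and> y \<in> inv_lim_V Fs \<alpha> \<and> (\<forall>n. (x n, y n) \<in> snd (Fs n))}"

definition admissible ::
  "(fgraph \<Rightarrow> fgraph \<Rightarrow> (nat \<Rightarrow> nat) \<Rightarrow> bool) \<Rightarrow> (nat \<Rightarrow> fgraph) \<Rightarrow> (nat \<Rightarrow> nat \<Rightarrow> nat) \<Rightarrow>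
   fgraph \<Rightarrow> ((nat \<Rightarrow> nat) \<Rightarrow> nat) \<Rightarrow> bool" where
  "admissible M Fs \<alpha> A h \<longleftrightarrow>
     (\<exists>m h'. M (Fs m) A h' \<and> (\<forall>x\<in>inv_lim_V Fs \<alpha>. h x = h' (x m)))"

definition is_proj_fraisse_limit ::
  "fgraph set \<Rightarrow> (fgraph \<Rightarrow> fgraph \<Rightarrow> (nat \<Rightarrow> nat) \<Rightarrow> bool) \<Rightarrow> (nat \<Rightarrow> fgraph) \<Rightarrow> (nat \<Rightarrow> nat \<Rightarrow> nat) \<Rightarrow> bool" where
  "is_proj_fraisse_limit G M Fs \<alpha> \<longleftrightarrow>
     (\<forall>n. M (Fs (Suc n)) (Fs n) (\<alpha> n)) \<and>
     (\<forall>A\<in>G. \<exists>h. admissible M Fs \<alpha> A h \<and>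
        epimorphism (inv_lim_V Fs \<alpha>) (inv_lim_E Fs \<alpha>) (fst A) (snd A) h) \<and>
     (\<forall>A B f g. A \<in> G \<and> admissible M Fs \<alpha> A f \<and> M B A g \<longrightarrow>
        (\<exists>h. admissible M Fs \<alpha> B h \<and> (\<forall>x\<in>inv_lim_V Fs \<alpha>. f x = g (h x))))"

definition hausdorff_dist :: "('a \<Rightarrow> 'a \<Rightarrow> real) \<Rightarrow> 'a set \<Rightarrow> 'a set \<Rightarrow> real" where
  "hausdorff_dist d A B =
     max (SUP a\<in>A. INF b\<in>B. d a b) (SUP b\<in>B. INF a\<in>A. d a b)"

definition kelley :: "'a::topological_space set \<Rightarrow> ('a \<times> 'a) set \<Rightarrow> bool" where
  "kelley V E \<longleftrightarrow> g_connected E V \<and>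
     (\<forall>d. Metric_space V d \<and> Metric_space.mtopology V d = top_of_set V \<longrightarrow>
       (\<forall>K p pn. K \<subseteq> V \<and> closedin (top_of_set V) K \<and> g_connected E K \<and> p \<in> K \<and>
           (\<forall>n. pn n \<in> V) \<and> pn \<longlonglongrightarrow> p \<longrightarrow>
          (\<exists>Kn. (\<forall>n. Kn n \<subseteq> V \<and> closedin (top_of_set V) (Kn n) \<and> g_connected E (Kn n) \<and>
                     pn n \<in> Kn n) \<and>
                (\<lambda>n. hausdorff_dist d (Kn n) K) \<longlonglongrightarrow> 0)))"

end

theory Submission
  imports Defs
begin


lemma closed_nat_set: "closed (S::nat set)"
  by (simp add: closed_def open_discrete)

lemma compact_PiE_nat:
  assumes "\<And>n. finite (F n)"
  shows "compact (PiE UNIV F :: (nat \<Rightarrow> nat) set)"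
proof -
  have "compact_space (product_topology (\<lambda>i. subtopology euclidean (F i)) UNIV)"
    using assms by (auto simp: compact_space_product_topology compact_space_subtopology finite_imp_compact)
  then have "compact_space (subtopology (product_topology (\<lambda>i. euclidean) UNIV) (PiE UNIV F))"
    by (simp add: subtopology_product_topology)
  then show ?thesis
    by (simp add: euclidean_product_topology compact_space_def compactin_subtopology)
qed

lemma tendsto_coord_eventually:
  fixes a :: "nat \<Rightarrow> nat \<Rightarrow> nat"
  assumes "a \<longlonglongrightarrow> x"
  shows "eventually (\<lambda>k. a k j = x j) sequentially"
proof -
  have "(\<lambda>k. a k j) \<longlonglongrightarrow> x j"
    by (rule continuous_on_tendsto_compose[OF continuous_on_product_coordinates assms]) auto
  then show ?thesis
    by (simp add: tendsto_discrete)
qed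

lemma closed_coord: "closed {x::nat\<Rightarrow>nat. P (x j)}"
proof -
  have "\<forall>B. closed {x::nat\<Rightarrow>nat. x j \<in> B}"
    using continuous_on_closed_vimage[of UNIV "\<lambda>x::nat\<Rightarrow>nat. x j"] closed_nat_set by (auto simp: vimage_def)
  then have "closed {x::nat\<Rightarrow>nat. x j \<in> {n. P n}}" by blast
  then show ?thesis by simp
qed

lemma closed_coord2: "closed {x::nat\<Rightarrow>nat. f (x i) = x j}"
proof -
  have c1: "continuous_on UNIV (\<lambda>x::nat\<Rightarrow>nat. f (x i))"
    using continuous_on_compose[of UNIV "\<lambda>x::nat\<Rightarrow>nat. x i" f] by (simp add: o_def)
  show ?thesis
    by (rule closed_Collect_eq[OF c1 continuous_on_product_coordinates, simplified])
qed



lemma closedin_nat: "P \<subseteq> S \<Longrightarrow> closedin (top_of_set S) (P::nat set)"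
  by (metis closed_nat_set closedin_closed_Int inf.absorb_iff2)

lemma gconn_D:
  assumes "g_connected E T" "P \<noteq> {}" "Q \<noteq> {}" "P \<inter> Q = {}" "T = P \<union> Q"
    "closedin (top_of_set T) P" "closedin (top_of_set T) Q" "\<forall>p\<in>P. \<forall>q\<in>Q. (p, q) \<notin> E"
  shows False
  using assms unfolding g_connected_def by blast

lemma gconn_single: "g_connected E {x}"
  unfolding g_connected_def by (metis Un_empty insert_not_empty singleton_Un_iff disjoint_iff Int_insert_left_if1 insertI1 Un_iff)

lemma gconn_Union:
  assumes "\<And>T. T \<in> TT \<Longrightarrow> g_connected E T \<and> x \<in> T"
  shows "g_connected E (\<Union>TT)"
  unfolding g_connected_def
proof
  assume "\<exists>P Q. P \<noteq> {} \<and> Q \<noteq> {} \<and> P \<inter> Q = {} \<and> \<Union>TT = P \<union> Q \<and>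
      closedin (top_of_set (\<Union>TT)) P \<and> closedin (top_of_set (\<Union>TT)) Q \<and> (\<forall>p\<in>P. \<forall>q\<in>Q. (p, q) \<notin> E)"
  then obtain P Q where PQ: "P \<noteq> {}" "Q \<noteq> {}" "P \<inter> Q = {}" "\<Union>TT = P \<union> Q"
    "closedin (top_of_set (\<Union>TT)) P" "closedin (top_of_set (\<Union>TT)) Q" "\<forall>p\<in>P. \<forall>q\<in>Q. (p, q) \<notin> E"
    by blast
  obtain CP where CP: "closed CP" "P = \<Union>TT \<inter> CP" using PQ(5) by (auto simp: closedin_closed)
  obtain CQ where CQ: "closed CQ" "Q = \<Union>TT \<inter> CQ" using PQ(6) by (auto simp: closedin_closed)
  have side: "T \<inter> P = {} \<or> T \<inter> Q = {}" if T: "T \<in> TT" for T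
  proof (rule ccontr)
    assume ne: "\<not> (T \<inter> P = {} \<or> T \<inter> Q = {})"
    have "T \<subseteq> \<Union>TT" using T by blast
    then have "T \<inter> P = T \<inter> CP" "T \<inter> Q = T \<inter> CQ" using CP CQ by auto
    then have c: "closedin (top_of_set T) (T \<inter> P)" "closedin (top_of_set T) (T \<inter> Q)"
      using CP CQ by (auto intro: closedin_closed_Int)
    have "T = (T \<inter> P) \<union> (T \<inter> Q)" using PQ(4) T by blast
    moreover have "(T \<inter> P) \<inter> (T \<inter> Q) = {}" using PQ(3) by blast
    moreover have "\<forall>p\<in>T \<inter> P. \<forall>q\<in>T \<inter> Q. (p, q) \<notin> E" using PQ(7) by blast
    moreover have "T \<inter> P \<noteq> {}" "T \<inter> Q \<noteq> {}" using ne by auto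
    ultimately show False using assms[OF T] c by (metis gconn_D)
  qed
  have "x \<in> P \<or> x \<in> Q"
  proof -
    obtain T where "T \<in> TT" using PQ(1,4) by blast
    then show ?thesis using assms PQ(4) by blast
  qed
  then show False
  proof
    assume "x \<in> P"
    then have "\<forall>T\<in>TT. T \<inter> Q = {}" using side assms by blast
    then show False using PQ(2,4) by blast
  next
    assume "x \<in> Q"
    then have "\<forall>T\<in>TT. T \<inter> P = {}" using side assms by blast
    then show False using PQ(1,4) by blast
  qed
qed

definition comp_at :: "('a::topological_space \<times> 'a) set \<Rightarrow> 'a set \<Rightarrow> 'a \<Rightarrow> 'a set" where
  "comp_at E S x = \<Union>{T. T \<subseteq> S \<and> x \<in> T \<and> g_connected E T}"

lemma comp_at_sub: "comp_at E S x \<subseteq> S"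
  unfolding comp_at_def by blast

lemma comp_at_max: "T \<subseteq> S \<Longrightarrow> x \<in> T \<Longrightarrow> g_connected E T \<Longrightarrow> T \<subseteq> comp_at E S x"
  unfolding comp_at_def by blast

lemma comp_at_mem: "x \<in> S \<Longrightarrow> x \<in> comp_at E S x"
  using comp_at_max[of "{x}" S x E] gconn_single by blast

lemma comp_at_conn: "g_connected E (comp_at E S x)"
  unfolding comp_at_def by (rule gconn_Union) blast

lemma comp_at_component: "x \<in> S \<Longrightarrow> g_component E S (comp_at E S x)"
proof -
  assume x: "x \<in> S"
  have "L = comp_at E S x" if "comp_at E S x \<subseteq> L" "L \<subseteq> S" "g_connected E L" for L
  proof -
    have "x \<in> L" using that(1) comp_at_mem[OF x] by blast
    then have "L \<subseteq> comp_at E S x" using comp_at_max that by blast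
    then show ?thesis using that(1) by blast
  qed
  then show ?thesis unfolding g_component_def
    using comp_at_sub[of E S x] comp_at_conn[of E S x] by (intro conjI allI impI) auto
qed

lemma gconn_image:
  fixes f :: "'a::topological_space \<Rightarrow> nat"
  assumes cont: "continuous_on T f"
    and edge: "\<And>x y. x \<in> T \<Longrightarrow> y \<in> T \<Longrightarrow> (x, y) \<in> E1 \<Longrightarrow> (f x, f y) \<in> E2"
    and conn: "g_connected E1 T"
  shows "g_connected E2 (f ` T)"
  unfolding g_connected_def
proof
  assume "\<exists>P Q. P \<noteq> {} \<and> Q \<noteq> {} \<and> P \<inter> Q = {} \<and> f ` T = P \<union> Q \<and>
      closedin (top_of_set (f ` T)) P \<and> closedin (top_of_set (f ` T)) Q \<and> (\<forall>p\<in>P. \<forall>q\<in>Q. (p, q) \<notin> E2)"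
  then obtain P Q where PQ: "P \<noteq> {}" "Q \<noteq> {}" "P \<inter> Q = {}" "f ` T = P \<union> Q"
    "\<forall>p\<in>P. \<forall>q\<in>Q. (p, q) \<notin> E2"
    by blast
  define P' where "P' = T \<inter> f -` P"
  define Q' where "Q' = T \<inter> f -` Q"
  have ne: "T \<inter> f -` A \<noteq> {}" if hA: "A \<noteq> {}" "A \<subseteq> f ` T" for A
  proof -
    obtain a where "a \<in> A" using hA by blast
    then obtain t where "t \<in> T" "f t = a" using hA by blast
    then show ?thesis using \<open>a \<in> A\<close> by blast
  qed
  have "P' \<noteq> {}" unfolding P'_def by (rule ne) (use PQ(1,4) in auto)
  moreover have "Q' \<noteq> {}" unfolding Q'_def by (rule ne) (use PQ(2,4) in auto)
  moreover have "P' \<inter> Q' = {}" using PQ(3) unfolding P'_def Q'_def by blast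
  moreover have "T = P' \<union> Q'" using PQ(4) unfolding P'_def Q'_def by blast
  moreover have "closedin (top_of_set T) P'" "closedin (top_of_set T) Q'"
    unfolding P'_def Q'_def using continuous_closedin_preimage[OF cont closed_nat_set] by auto
  moreover have "\<forall>p\<in>P'. \<forall>q\<in>Q'. (p, q) \<notin> E1"
    using PQ(5) edge unfolding P'_def Q'_def by blast
  ultimately show False using gconn_D[OF conn] by blast
qed

fun bnd :: "(nat \<Rightarrow> nat \<Rightarrow> nat) \<Rightarrow> nat \<Rightarrow> nat \<Rightarrow> nat \<Rightarrow> nat" where
  "bnd a m 0 z = z"
| "bnd a m (Suc i) z = bnd a m i (a (m + i) z)"

lemma bnd_Suc': "bnd a m (Suc i) z = a m (bnd a (Suc m) i z)"
  by (induction i arbitrary: z) auto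

lemma thread_bnd: "x \<in> inv_lim_V Fs a \<Longrightarrow> bnd a m i (x (m + i)) = x m"
  by (induction i) (auto simp: inv_lim_V_def)

lemma thread_agree:
  assumes "x \<in> inv_lim_V Fs a" "y \<in> inv_lim_V Fs a" "x k = y k" "j \<le> k"
  shows "x j = y j"
  using thread_bnd[OF assms(1), of j "k - j"] thread_bnd[OF assms(2), of j "k - j"] assms(3,4) by simp

lemma thread_edge:
  assumes "x \<in> inv_lim_V Fs a" "y \<in> inv_lim_V Fs a"
    and epi: "\<And>n. epimorphism (fst (Fs (Suc n))) (snd (Fs (Suc n))) (fst (Fs n)) (snd (Fs n)) (a n)"
    and "(x k, y k) \<in> snd (Fs k)" "j \<le> k"
  shows "(x j, y j) \<in> snd (Fs j)"
proof -
  have "\<forall>j. (x (j + d), y (j + d)) \<in> snd (Fs (j + d)) \<longrightarrow> (x j, y j) \<in> snd (Fs j)" for d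
  proof (induction d)
    case 0 then show ?case by simp
  next
    case (Suc d)
    show ?case
    proof (intro allI impI)
      fix j assume h: "(x (j + Suc d), y (j + Suc d)) \<in> snd (Fs (j + Suc d))"
      then have "(x (Suc j), y (Suc j)) \<in> snd (Fs (Suc j))" using Suc[rule_format, of "Suc j"] by simp
      then have "(a j (x (Suc j)), a j (y (Suc j))) \<in> snd (Fs j)"
        using epi[of j] unfolding epimorphism_def by blast
      then show "(x j, y j) \<in> snd (Fs j)" using assms(1,2) by (simp add: inv_lim_V_def)
    qed
  qed
  then show ?thesis using assms(4,5) by (metis le_add_diff_inverse)
qed



lemma seq_extract:
  fixes a :: "nat \<Rightarrow> nat \<Rightarrow> nat"
  assumes "compact S" "\<And>k. a k \<in> S"
  shows "\<exists>x r. x \<in> S \<and> strict_mono r \<and> (a \<circ> r) \<longlonglongrightarrow> x"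
  using compact_imp_seq_compact[OF assms(1)] assms(2) unfolding seq_compact_def by blast

lemma two_subseq:
  fixes A B :: "nat \<Rightarrow> nat \<Rightarrow> nat"
  assumes "compact S1" "compact S2" "\<And>t. A t \<in> S1" "\<And>t. B t \<in> S2"
  shows "\<exists>x y r. x \<in> S1 \<and> y \<in> S2 \<and> strict_mono r \<and> (A \<circ> r) \<longlonglongrightarrow> x \<and> (B \<circ> r) \<longlonglongrightarrow> y \<and>
     (\<forall>j. eventually (\<lambda>t. A (r t) j = x j \<and> B (r t) j = y j \<and> j \<le> r t) sequentially)"
proof -
  have "\<exists>x r. x \<in> S1 \<and> strict_mono r \<and> (A \<circ> r) \<longlonglongrightarrow> x"
    by (rule seq_extract[OF assms(1,3)])
  then obtain x r where x: "x \<in> S1" "strict_mono r" "(A \<circ> r) \<longlonglongrightarrow> x"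
    by (elim exE conjE)
  have "\<And>k. (B \<circ> r) k \<in> S2" using assms(4) by simp
  then have "\<exists>y s. y \<in> S2 \<and> strict_mono s \<and> (B \<circ> r \<circ> s) \<longlonglongrightarrow> y"
    by (rule seq_extract[OF assms(2)])
  then obtain y s where y: "y \<in> S2" "strict_mono s" "(B \<circ> r \<circ> s) \<longlonglongrightarrow> y"
    by (elim exE conjE)
  have rs: "strict_mono (r \<circ> s)" using strict_mono_o[OF x(2) y(2)] .
  have xa: "(A \<circ> (r \<circ> s)) \<longlonglongrightarrow> x" using LIMSEQ_subseq_LIMSEQ[OF x(3) y(2)] by (simp add: o_assoc)
  have yb: "(B \<circ> (r \<circ> s)) \<longlonglongrightarrow> y" using y(3) by (simp add: o_assoc)
  have "eventually (\<lambda>t. A ((r \<circ> s) t) j = x j \<and> B ((r \<circ> s) t) j = y j \<and> j \<le> (r \<circ> s) t) sequentially" for j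
  proof -
    have e1: "eventually (\<lambda>t. (A \<circ> (r \<circ> s)) t j = x j) sequentially"
      by (rule tendsto_coord_eventually[OF xa])
    have e2: "eventually (\<lambda>t. (B \<circ> (r \<circ> s)) t j = y j) sequentially"
      by (rule tendsto_coord_eventually[OF yb])
    have e3: "eventually (\<lambda>t. j \<le> (r \<circ> s) t) sequentially"
      using eventually_ge_at_top[of j] by eventually_elim (meson le_trans seq_suble[OF rs])
    show ?thesis using e1 e2 e3 by eventually_elim simp
  qed
  then show ?thesis using x(1) y(1) rs xa yb by blast
qed

lemma gconn_nat_D:
  assumes "g_connected E (T::nat set)" "P \<noteq> {}" "Q \<noteq> {}" "P \<inter> Q = {}" "T = P \<union> Q"
  shows "\<exists>p\<in>P. \<exists>q\<in>Q. (p, q) \<in> E"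
  using gconn_D[OF assms] closedin_nat[of P T] closedin_nat[of Q T] assms(5) by blast

locale invlim =
  fixes Fs :: "nat \<Rightarrow> fgraph" and \<alpha> :: "nat \<Rightarrow> nat \<Rightarrow> nat"
  assumes fin: "\<And>n. finite (fst (Fs n))"
    and conf: "\<And>n. confluent (Fs (Suc n)) (Fs n) (\<alpha> n)"
begin

lemma epi: "epimorphism (fst (Fs (Suc n))) (snd (Fs (Suc n))) (fst (Fs n)) (snd (Fs n)) (\<alpha> n)"
  using conf[of n] unfolding confluent_def by blast

lemma V_closed: "closed (inv_lim_V Fs \<alpha>)"
proof -
  have "inv_lim_V Fs \<alpha> = (\<Inter>n. {x. x n \<in> fst (Fs n)} \<inter> {x. \<alpha> n (x (Suc n)) = x n})"
    by (auto simp: inv_lim_V_def)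
  then show ?thesis using closed_coord closed_coord2 by (auto intro!: closed_INT closed_Int)
qed

lemma V_compact: "compact (inv_lim_V Fs \<alpha>)"
proof -
  have "inv_lim_V Fs \<alpha> = PiE UNIV (\<lambda>n. fst (Fs n)) \<inter> inv_lim_V Fs \<alpha>"
    by (auto simp: inv_lim_V_def PiE_def)
  then show ?thesis using compact_Int_closed[OF compact_PiE_nat[of "\<lambda>n. fst (Fs n)", OF fin] V_closed] by simp
qed

lemma closed_sub_compact: "closed S \<Longrightarrow> S \<subseteq> inv_lim_V Fs \<alpha> \<Longrightarrow> compact S"
  using compact_Int_closed[OF V_compact, of S] by (simp add: inf.absorb2)

lemma bnd_into:
  assumes "\<And>n. j \<le> n \<Longrightarrow> \<alpha> n ` D (Suc n) \<subseteq> D n" "z \<in> D (j + i)"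
  shows "bnd \<alpha> j i z \<in> D j"
  using assms(2)
proof (induction i arbitrary: z)
  case 0 then show ?case by simp
next
  case (Suc i)
  have "\<alpha> (j + i) z \<in> D (j + i)" using assms(1)[of "j + i"] Suc.prems by auto
  then show ?case using Suc.IH by simp
qed

lemma lim_surj:
  assumes Csub: "\<And>k. m \<le> k \<Longrightarrow> C k \<subseteq> fst (Fs k)"
    and Cim: "\<And>k. m \<le> k \<Longrightarrow> \<alpha> k ` C (Suc k) = C k"
    and "m \<le> k" "c \<in> C k"
  shows "\<exists>x\<in>inv_lim_V Fs \<alpha>. (\<forall>j\<ge>m. x j \<in> C j) \<and> x k = c"
proof -
  define y where "y = rec_nat c (\<lambda>i yi. SOME z. z \<in> C (Suc (k + i)) \<and> \<alpha> (k + i) z = yi)"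
  have y0: "y 0 = c" by (simp add: y_def)
  have yS: "y (Suc i) = (SOME z. z \<in> C (Suc (k + i)) \<and> \<alpha> (k + i) z = y i)" for i
    by (simp add: y_def)
  have yC: "y i \<in> C (k + i) \<and> y (Suc i) \<in> C (Suc (k + i)) \<and> \<alpha> (k + i) (y (Suc i)) = y i" for i
  proof (induction i)
    case 0
    have "c \<in> \<alpha> k ` C (Suc k)" using Cim[OF assms(3)] assms(4) by simp
    then have "\<exists>z. z \<in> C (Suc (k + 0)) \<and> \<alpha> (k + 0) z = y 0" using y0 by auto
    from someI_ex[OF this] show ?case using y0 yS[of 0] assms(4) by simp
  next
    case (Suc i)
    have "y (Suc i) \<in> \<alpha> (Suc (k + i)) ` C (Suc (Suc (k + i)))"
      using Cim[of "Suc (k + i)"] Suc.IH assms(3) by simp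
    then have "\<exists>z. z \<in> C (Suc (k + Suc i)) \<and> \<alpha> (k + Suc i) z = y (Suc i)" by auto
    from someI_ex[OF this] show ?case using yS[of "Suc i"] Suc.IH by simp
  qed
  define x where "x = (\<lambda>j. if k \<le> j then y (j - k) else bnd \<alpha> j (k - j) c)"
  have xS: "x (Suc n) = bnd \<alpha> (Suc n) (k - Suc n) c" if "n < k" for n
    using that y0 by (auto simp: x_def)
  have Fim: "\<alpha> n ` fst (Fs (Suc n)) \<subseteq> fst (Fs n)" for n
    using epi[of n] unfolding epimorphism_def by blast
  have ck: "c \<in> fst (Fs k)" using Csub[OF assms(3)] assms(4) by blast
  have xV: "x \<in> inv_lim_V Fs \<alpha>"
    unfolding inv_lim_V_def
  proof (intro CollectI allI conjI)
    fix n
    show "x n \<in> fst (Fs n)"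
    proof (cases "k \<le> n")
      case True
      then show ?thesis using yC[of "n - k"] Csub[of n] assms(3) by (auto simp: x_def)
    next
      case False
      then show ?thesis using bnd_into[of n "\<lambda>n. fst (Fs n)" c "k - n"] Fim ck by (auto simp: x_def)
    qed
    show "\<alpha> n (x (Suc n)) = x n"
    proof (cases "k \<le> n")
      case True
      then have "Suc n - k = Suc (n - k)" by simp
      then show ?thesis using yC[of "n - k"] True by (auto simp: x_def)
    next
      case False
      then have "\<alpha> n (x (Suc n)) = \<alpha> n (bnd \<alpha> (Suc n) (k - Suc n) c)" using xS by simp
      also have "\<dots> = bnd \<alpha> n (Suc (k - Suc n)) c" by (rule bnd_Suc'[symmetric])
      also have "Suc (k - Suc n) = k - n" using False by simp
      finally show ?thesis using False by (simp add: x_def)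
    qed
  qed
  have "x j \<in> C j" if "m \<le> j" for j
  proof (cases "k \<le> j")
    case True
    then show ?thesis using yC[of "j - k"] by (auto simp: x_def)
  next
    case False
    have "bnd \<alpha> j (k - j) c \<in> C j"
      by (rule bnd_into[of j C]) (use Cim that False assms(4) in auto)
    then show ?thesis using False by (simp add: x_def)
  qed
  moreover have "x k = c" using y0 by (simp add: x_def)
  ultimately show ?thesis using xV by blast
qed

end



context invlim
begin

definition limset :: "nat \<Rightarrow> (nat \<Rightarrow> nat set) \<Rightarrow> (nat \<Rightarrow> nat) set" where
  "limset m C = {x \<in> inv_lim_V Fs \<alpha>. \<forall>k\<ge>m. x k \<in> C k}"

lemma limset_V: "limset m C \<subseteq> inv_lim_V Fs \<alpha>"
  by (auto simp: limset_def)

lemma limset_closed: "closed (limset m C)"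
proof -
  have "limset m C = inv_lim_V Fs \<alpha> \<inter> (\<Inter>k\<in>{m..}. {x. x k \<in> C k})"
    by (auto simp: limset_def)
  then show ?thesis using V_closed closed_coord by (auto intro!: closed_INT closed_Int)
qed

lemma limset_proj:
  assumes Csub: "\<And>k. m \<le> k \<Longrightarrow> C k \<subseteq> fst (Fs k)"
    and Cim: "\<And>k. m \<le> k \<Longrightarrow> \<alpha> k ` C (Suc k) = C k"
    and "m \<le> k"
  shows "(\<lambda>x. x k) ` limset m C = C k"
proof
  show "(\<lambda>x. x k) ` limset m C \<subseteq> C k" using assms(3) by (auto simp: limset_def)
  show "C k \<subseteq> (\<lambda>x. x k) ` limset m C"
  proof
    fix c assume "c \<in> C k"
    then obtain x where "x \<in> inv_lim_V Fs \<alpha>" "\<forall>j\<ge>m. x j \<in> C j" "x k = c"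
      using lim_surj[OF Csub Cim assms(3)] by blast
    then show "c \<in> (\<lambda>x. x k) ` limset m C" unfolding limset_def by force
  qed
qed

lemma limset_gconn:
  assumes Csub: "\<And>k. m \<le> k \<Longrightarrow> C k \<subseteq> fst (Fs k)"
    and Cim: "\<And>k. m \<le> k \<Longrightarrow> \<alpha> k ` C (Suc k) = C k"
    and Cconn: "\<And>k. m \<le> k \<Longrightarrow> g_connected (snd (Fs k)) (C k)"
  shows "g_connected (inv_lim_E Fs \<alpha>) (limset m C)"
  unfolding g_connected_def
proof
  let ?L = "limset m C"
  let ?V = "inv_lim_V Fs \<alpha>"
  assume "\<exists>P Q. P \<noteq> {} \<and> Q \<noteq> {} \<and> P \<inter> Q = {} \<and> ?L = P \<union> Q \<and>
      closedin (top_of_set ?L) P \<and> closedin (top_of_set ?L) Q \<and> (\<forall>p\<in>P. \<forall>q\<in>Q. (p, q) \<notin> inv_lim_E Fs \<alpha>)"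
  then obtain P Q where PQ: "P \<noteq> {}" "Q \<noteq> {}" "P \<inter> Q = {}" "?L = P \<union> Q"
    "closedin (top_of_set ?L) P" "closedin (top_of_set ?L) Q" "\<forall>p\<in>P. \<forall>q\<in>Q. (p, q) \<notin> inv_lim_E Fs \<alpha>"
    by blast
  have PV: "P \<subseteq> ?V" "Q \<subseteq> ?V" using PQ(4) limset_V by auto
  have cP: "compact P" using closedin_closed_trans[OF PQ(5) limset_closed] PV closed_sub_compact by blast
  have cQ: "compact Q" using closedin_closed_trans[OF PQ(6) limset_closed] PV closed_sub_compact by blast
  have "\<exists>n\<ge>m. \<forall>a\<in>P. \<forall>b\<in>Q. a n \<noteq> b n"
  proof (rule ccontr)
    assume "\<not> (\<exists>n\<ge>m. \<forall>a\<in>P. \<forall>b\<in>Q. a n \<noteq> b n)"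
    then have "\<forall>t. \<exists>a b. a \<in> P \<and> b \<in> Q \<and> a (t + m) = b (t + m)" by (metis le_add2)
    then obtain A B where AB: "\<And>t. A t \<in> P" "\<And>t. B t \<in> Q" "\<And>t. A t (t + m) = B t (t + m)"
      by metis
    obtain x y r where xy: "x \<in> P" "y \<in> Q" "strict_mono r"
      "\<forall>j. eventually (\<lambda>t. A (r t) j = x j \<and> B (r t) j = y j \<and> j \<le> r t) sequentially"
      using two_subseq[where A=A and B=B, OF cP cQ AB(1) AB(2)] by blast
    have "x j = y j" for j
    proof -
      obtain t where t: "A (r t) j = x j" "B (r t) j = y j" "j \<le> r t"
        using eventually_happens'[OF _ xy(4)[rule_format, of j]] by auto
      have "A (r t) j = B (r t) j"
        by (rule thread_agree[of _ Fs \<alpha> _ "r t + m"]) (use PV AB t in auto)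
      then show ?thesis using t by simp
    qed
    then have "x = y" by auto
    then show False using xy(1,2) PQ(3) by blast
  qed
  then obtain n where n: "n \<ge> m" "\<forall>a\<in>P. \<forall>b\<in>Q. a n \<noteq> b n" by blast
  have "\<exists>a b. a \<in> P \<and> b \<in> Q \<and> (a (t + n), b (t + n)) \<in> snd (Fs (t + n))" for t
  proof -
    let ?k = "t + n"
    have km: "m \<le> ?k" using n by simp
    have "C ?k = (\<lambda>x. x ?k) ` P \<union> (\<lambda>x. x ?k) ` Q"
      using limset_proj[OF Csub Cim km] PQ(4) by (simp add: image_Un)
    moreover have "(\<lambda>x. x ?k) ` P \<inter> (\<lambda>x. x ?k) ` Q = {}"
    proof (rule ccontr)
      assume "(\<lambda>x. x ?k) ` P \<inter> (\<lambda>x. x ?k) ` Q \<noteq> {}"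
      then obtain a b where ab: "a \<in> P" "b \<in> Q" "a ?k = b ?k" by auto
      have "a n = b n" by (rule thread_agree[of _ Fs \<alpha> _ ?k]) (use PV ab in auto)
      then show False using n ab by blast
    qed
    moreover have "(\<lambda>x. x ?k) ` P \<noteq> {}" "(\<lambda>x. x ?k) ` Q \<noteq> {}" using PQ(1,2) by auto
    ultimately have "\<exists>p\<in>(\<lambda>x. x ?k) ` P. \<exists>q\<in>(\<lambda>x. x ?k) ` Q. (p, q) \<in> snd (Fs ?k)"
      using gconn_nat_D[OF Cconn[OF km]] by presburger
    then show ?thesis by blast
  qed
  then obtain A B where AB: "\<And>t. A t \<in> P" "\<And>t. B t \<in> Q"
    "\<And>t. (A t (t + n), B t (t + n)) \<in> snd (Fs (t + n))"
    by metis
  obtain x y r where xy: "x \<in> P" "y \<in> Q" "strict_mono r"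
    "\<forall>j. eventually (\<lambda>t. A (r t) j = x j \<and> B (r t) j = y j \<and> j \<le> r t) sequentially"
    using two_subseq[where A=A and B=B, OF cP cQ AB(1) AB(2)] by blast
  have "(x j, y j) \<in> snd (Fs j)" for j
  proof -
    obtain t where t: "A (r t) j = x j" "B (r t) j = y j" "j \<le> r t"
      using eventually_happens'[OF _ xy(4)[rule_format, of j]] by auto
    have "(A (r t) j, B (r t) j) \<in> snd (Fs j)"
      by (rule thread_edge[of _ Fs \<alpha> _ "r t + n"]) (use PV AB t epi in auto)
    then show ?thesis using t by simp
  qed
  then have "(x, y) \<in> inv_lim_E Fs \<alpha>" using xy(1,2) PV unfolding inv_lim_E_def by blast
  then show False using PQ(7) xy(1,2) by blast
qed

end



context invlim
begin

lemma F_im: "\<alpha> k ` fst (Fs (Suc k)) = fst (Fs k)"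
  using epi[of k] unfolding epimorphism_def by blast

lemma E_im: "(x, y) \<in> snd (Fs (Suc k)) \<Longrightarrow> (\<alpha> k x, \<alpha> k y) \<in> snd (Fs k)"
  using epi[of k] unfolding epimorphism_def by blast

lemma V_gconn:
  assumes conn: "\<And>n. g_connected (snd (Fs n)) (fst (Fs n))"
  shows "g_connected (inv_lim_E Fs \<alpha>) (inv_lim_V Fs \<alpha>)"
proof -
  have "limset 0 (\<lambda>k. fst (Fs k)) = inv_lim_V Fs \<alpha>"
    by (auto simp: limset_def inv_lim_V_def)
  moreover have "g_connected (inv_lim_E Fs \<alpha>) (limset 0 (\<lambda>k. fst (Fs k)))"
    by (rule limset_gconn) (auto simp: F_im conn)
  ultimately show ?thesis by simp
qed

lemma proj_gconn:
  assumes "K \<subseteq> inv_lim_V Fs \<alpha>" "g_connected (inv_lim_E Fs \<alpha>) K"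
  shows "g_connected (snd (Fs m)) ((\<lambda>x. x m) ` K)"
proof (rule gconn_image[OF _ _ assms(2)])
  show "continuous_on K (\<lambda>x::nat\<Rightarrow>nat. x m)"
    by (rule continuous_on_subset[OF continuous_on_product_coordinates]) simp
  show "\<And>x y. x \<in> K \<Longrightarrow> y \<in> K \<Longrightarrow> (x, y) \<in> inv_lim_E Fs \<alpha> \<Longrightarrow> (x m, y m) \<in> snd (Fs m)"
    by (auto simp: inv_lim_E_def)
qed

lemma build:
  assumes KV: "K \<subseteq> inv_lim_V Fs \<alpha>" and Kc: "g_connected (inv_lim_E Fs \<alpha>) K"
    and qV: "q \<in> inv_lim_V Fs \<alpha>" and qK: "q m \<in> (\<lambda>x. x m) ` K"
  shows "\<exists>L. L \<subseteq> inv_lim_V Fs \<alpha> \<and> closed L \<and> g_connected (inv_lim_E Fs \<alpha>) L \<and> q \<in> L \<and>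
           (\<lambda>x. x m) ` L = (\<lambda>x. x m) ` K"
proof -
  define Q where "Q = (\<lambda>x. x m) ` K"
  have QF: "Q \<subseteq> fst (Fs m)" using KV unfolding Q_def inv_lim_V_def by auto
  have Qc: "g_connected (snd (Fs m)) Q" unfolding Q_def by (rule proj_gconn[OF KV Kc])
  define S where "S k = {y \<in> fst (Fs k). bnd \<alpha> m (k - m) y \<in> Q}" for k
  define C where "C k = comp_at (snd (Fs k)) (S k) (q k)" for k
  have qF: "q k \<in> fst (Fs k)" for k using qV by (auto simp: inv_lim_V_def)
  have qS: "q k \<in> S k" if "m \<le> k" for k
  proof -
    have "bnd \<alpha> m (k - m) (q (m + (k - m))) = q m" by (rule thread_bnd[OF qV])
    then show ?thesis using that qF qK unfolding S_def Q_def by simp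
  qed
  have CS: "C k \<subseteq> S k" for k unfolding C_def by (rule comp_at_sub)
  have SF: "S k \<subseteq> fst (Fs k)" for k unfolding S_def by blast
  have Cconn: "g_connected (snd (Fs k)) (C k)" for k unfolding C_def by (rule comp_at_conn)
  have qC: "q k \<in> C k" if "m \<le> k" for k unfolding C_def by (rule comp_at_mem[OF qS[OF that]])
  have Ssuc: "x \<in> S (Suc k)" if "m \<le> k" "x \<in> fst (Fs (Suc k))" "\<alpha> k x \<in> S k" for k x
  proof -
    have "Suc k - m = Suc (k - m)" "m + (k - m) = k" using that(1) by auto
    then have "bnd \<alpha> m (Suc k - m) x = bnd \<alpha> m (k - m) (\<alpha> k x)" by simp
    then show ?thesis using that unfolding S_def by simp
  qed
  have Sdown: "\<alpha> k x \<in> S k" if "m \<le> k" "x \<in> S (Suc k)" for k x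
  proof -
    have "Suc k - m = Suc (k - m)" "m + (k - m) = k" using that(1) by auto
    then have "bnd \<alpha> m (Suc k - m) x = bnd \<alpha> m (k - m) (\<alpha> k x)" by simp
    moreover have "\<alpha> k x \<in> fst (Fs k)" using that(2) F_im[of k] SF[of "Suc k"] by blast
    ultimately show ?thesis using that unfolding S_def by simp
  qed
  have Cim: "\<alpha> k ` C (Suc k) = C k" if km: "m \<le> k" for k
  proof
    have "g_connected (snd (Fs k)) (\<alpha> k ` C (Suc k))"
      by (rule gconn_image[OF Topological_Spaces.continuous_on_discrete _ Cconn]) (rule E_im)
    moreover have "\<alpha> k ` C (Suc k) \<subseteq> S k" using CS Sdown km by blast
    moreover have "q k \<in> \<alpha> k ` C (Suc k)"
    proof -
      have "\<alpha> k (q (Suc k)) = q k" using qV by (simp add: inv_lim_V_def)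
      moreover have "q (Suc k) \<in> C (Suc k)" using qC[of "Suc k"] km by simp
      ultimately show ?thesis by (metis imageI)
    qed
    ultimately show "\<alpha> k ` C (Suc k) \<subseteq> C k" unfolding C_def by (meson comp_at_max)
  next
    define D where "D = comp_at (snd (Fs (Suc k))) {x \<in> fst (Fs (Suc k)). \<alpha> k x \<in> C k} (q (Suc k))"
    have qD: "q (Suc k) \<in> {x \<in> fst (Fs (Suc k)). \<alpha> k x \<in> C k}"
      using qF qC[OF km] qV by (auto simp: inv_lim_V_def)
    have "g_component (snd (Fs (Suc k))) {x \<in> fst (Fs (Suc k)). \<alpha> k x \<in> C k} D"
      unfolding D_def by (rule comp_at_component[OF qD])
    moreover have "C k \<subseteq> fst (Fs k)" using CS SF by blast
    ultimately have "\<alpha> k ` D = C k"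
      using conf[of k] Cconn[of k] closed_nat_set unfolding confluent_def by blast
    moreover have "D \<subseteq> C (Suc k)"
    proof -
      have "D \<subseteq> S (Suc k)"
        using comp_at_sub[of "snd (Fs (Suc k))" "{x \<in> fst (Fs (Suc k)). \<alpha> k x \<in> C k}" "q (Suc k)"]
          Ssuc[OF km] CS unfolding D_def by blast
      moreover have "q (Suc k) \<in> D" unfolding D_def by (rule comp_at_mem[OF qD])
      ultimately show ?thesis unfolding C_def D_def using comp_at_conn comp_at_max by metis
    qed
    ultimately show "C k \<subseteq> \<alpha> k ` C (Suc k)" by blast
  qed
  have CQ: "C m = Q"
  proof
    have "S m = Q" using QF unfolding S_def by auto
    then show "C m \<subseteq> Q" using CS by blast
    show "Q \<subseteq> C m" unfolding C_def using \<open>S m = Q\<close> Qc qS[of m]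
      by (intro comp_at_max) auto
  qed
  have CF: "\<And>k. m \<le> k \<Longrightarrow> C k \<subseteq> fst (Fs k)" using CS SF by blast
  define L where "L = limset m C"
  have "L \<subseteq> inv_lim_V Fs \<alpha>" unfolding L_def by (rule limset_V)
  moreover have "closed L" unfolding L_def by (rule limset_closed)
  moreover have "g_connected (inv_lim_E Fs \<alpha>) L" unfolding L_def
    by (rule limset_gconn[OF CF Cim Cconn])
  moreover have "q \<in> L" unfolding L_def limset_def using qV qC by blast
  moreover have "(\<lambda>x. x m) ` L = (\<lambda>x. x m) ` K"
    using limset_proj[OF CF Cim, of m] CQ unfolding L_def Q_def by simp
  ultimately show ?thesis by blast
qed

end



lemma haus_le:
  fixes d :: "'a \<Rightarrow> 'a \<Rightarrow> real"
  assumes ne: "A \<noteq> {}" "B \<noteq> {}" and nn: "\<And>a b. 0 \<le> d a b"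
    and ab: "\<forall>a\<in>A. \<exists>b\<in>B. d a b \<le> e" and ba: "\<forall>b\<in>B. \<exists>a\<in>A. d a b \<le> e"
  shows "0 \<le> hausdorff_dist d A B \<and> hausdorff_dist d A B \<le> e"
proof -
  have bb1: "bdd_below ((\<lambda>b. d a b) ` B)" for a unfolding bdd_below_def using nn by blast
  have bb2: "bdd_below ((\<lambda>a. d a b) ` A)" for b unfolding bdd_below_def using nn by blast
  have i1: "(INF b\<in>B. d a b) \<le> e" if "a \<in> A" for a
    using ab that cINF_lower[OF bb1] order_trans by metis
  have i2: "(INF a\<in>A. d a b) \<le> e" if "b \<in> B" for b
    using ba that cINF_lower[OF bb2] order_trans by metis
  have g1: "0 \<le> (INF b\<in>B. d a b)" for a using ne(2) nn by (auto intro: cINF_greatest)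
  have g2: "0 \<le> (INF a\<in>A. d a b)" for b using ne(1) nn by (auto intro: cINF_greatest)
  have s1: "(SUP a\<in>A. INF b\<in>B. d a b) \<le> e" using ne(1) i1 by (auto intro: cSUP_least)
  have s2: "(SUP b\<in>B. INF a\<in>A. d a b) \<le> e" using ne(2) i2 by (auto intro: cSUP_least)
  have ba1: "bdd_above ((\<lambda>a. INF b\<in>B. d a b) ` A)" unfolding bdd_above_def using i1 by blast
  have ba2: "bdd_above ((\<lambda>b. INF a\<in>A. d a b) ` B)" unfolding bdd_above_def using i2 by blast
  obtain a0 where "a0 \<in> A" using ne by blast
  then have t1: "0 \<le> (SUP a\<in>A. INF b\<in>B. d a b)" using cSUP_upper[OF _ ba1] g1 order_trans by metis
  show ?thesis unfolding hausdorff_dist_def using s1 s2 t1 by auto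
qed

context invlim
begin

lemma metric_conv:
  assumes ms: "Metric_space (inv_lim_V Fs \<alpha>) d"
    and mt: "Metric_space.mtopology (inv_lim_V Fs \<alpha>) d = top_of_set (inv_lim_V Fs \<alpha>)"
    and zV: "\<And>t. z t \<in> inv_lim_V Fs \<alpha>" and xV: "x \<in> inv_lim_V Fs \<alpha>" and lim: "z \<longlonglongrightarrow> x"
    and e: "e > 0"
  shows "eventually (\<lambda>t. d (z t) x < e) sequentially"
proof -
  have "limitin (top_of_set (inv_lim_V Fs \<alpha>)) z x sequentially"
    using zV xV lim by (simp add: limitin_subtopology limitin_canonical_iff)
  then have "limitin (Metric_space.mtopology (inv_lim_V Fs \<alpha>) d) z x sequentially" using mt by simp
  then have "\<forall>\<epsilon>>0. eventually (\<lambda>t. z t \<in> inv_lim_V Fs \<alpha> \<and> d (z t) x < \<epsilon>) sequentially"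
    using Metric_space.limitin_metric[OF ms] by blast
  then have "eventually (\<lambda>t. z t \<in> inv_lim_V Fs \<alpha> \<and> d (z t) x < e) sequentially" using e by blast
  then show ?thesis by (rule eventually_mono) simp
qed

lemma uniform:
  assumes ms: "Metric_space (inv_lim_V Fs \<alpha>) d"
    and mt: "Metric_space.mtopology (inv_lim_V Fs \<alpha>) d = top_of_set (inv_lim_V Fs \<alpha>)"
    and e: "e > 0"
  shows "\<exists>N. \<forall>x\<in>inv_lim_V Fs \<alpha>. \<forall>y\<in>inv_lim_V Fs \<alpha>. x N = y N \<longrightarrow> d x y < e"
proof (rule ccontr)
  let ?V = "inv_lim_V Fs \<alpha>"
  assume "\<not> ?thesis"
  then have "\<forall>N. \<exists>x y. x \<in> ?V \<and> y \<in> ?V \<and> x N = y N \<and> \<not> d x y < e" by blast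
  then obtain A B where AB: "\<And>t. A t \<in> ?V" "\<And>t. B t \<in> ?V" "\<And>t. A t t = B t t" "\<And>t. \<not> d (A t) (B t) < e"
    by metis
  obtain x y r where xy: "x \<in> ?V" "y \<in> ?V" "strict_mono r" "(A \<circ> r) \<longlonglongrightarrow> x" "(B \<circ> r) \<longlonglongrightarrow> y"
      "\<forall>j. eventually (\<lambda>t. A (r t) j = x j \<and> B (r t) j = y j \<and> j \<le> r t) sequentially"
    using two_subseq[where A=A and B=B, OF V_compact V_compact AB(1) AB(2)] by blast
  have "x j = y j" for j
  proof -
    obtain t where t: "A (r t) j = x j" "B (r t) j = y j" "j \<le> r t"
      using eventually_happens'[OF _ xy(6)[rule_format, of j]] by auto
    have "A (r t) j = B (r t) j"
      by (rule thread_agree[of _ Fs \<alpha> _ "r t"]) (use AB t in auto)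
    then show ?thesis using t by simp
  qed
  then have xy_eq: "x = y" by auto
  have e2: "e / 2 > 0" using e by simp
  have ev1: "eventually (\<lambda>t. d ((A \<circ> r) t) x < e / 2) sequentially"
    by (rule metric_conv[OF ms mt _ xy(1) xy(4) e2]) (simp add: AB)
  have ev2: "eventually (\<lambda>t. d ((B \<circ> r) t) x < e / 2) sequentially"
    by (rule metric_conv[OF ms mt _ xy(1) _ e2]) (use AB xy(5) xy_eq in \<open>auto simp: o_def\<close>)
  obtain t where t: "d (A (r t)) x < e / 2" "d (B (r t)) x < e / 2"
    using eventually_happens'[OF _ eventually_conj[OF ev1 ev2]] by auto
  have "d (A (r t)) (B (r t)) \<le> d (A (r t)) x + d x (B (r t))"
    by (rule Metric_space.triangle[OF ms]) (use AB xy in auto)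
  also have "d x (B (r t)) = d (B (r t)) x" by (rule Metric_space.commute[OF ms])
  finally have "d (A (r t)) (B (r t)) < e" using t by simp
  then show False using AB(4) by blast
qed

end



context invlim
begin

lemma kelley_main:
  assumes conn: "\<And>n. g_connected (snd (Fs n)) (fst (Fs n))"
  shows "kelley (inv_lim_V Fs \<alpha>) (inv_lim_E Fs \<alpha>)"
  unfolding kelley_def
proof (intro conjI allI impI)
  let ?V = "inv_lim_V Fs \<alpha>" and ?E = "inv_lim_E Fs \<alpha>"
  show "g_connected ?E ?V" by (rule V_gconn[OF conn])
  fix d K p pn
  assume dm: "Metric_space ?V d \<and> Metric_space.mtopology ?V d = top_of_set ?V"
  assume H: "K \<subseteq> ?V \<and> closedin (top_of_set ?V) K \<and> g_connected ?E K \<and> p \<in> K \<and>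
           (\<forall>n. pn n \<in> ?V) \<and> pn \<longlonglongrightarrow> p"
  have ms: "Metric_space ?V d" and mt: "Metric_space.mtopology ?V d = top_of_set ?V" using dm by auto
  have KV: "K \<subseteq> ?V" and Kc: "g_connected ?E K" and pK: "p \<in> K" and pnV: "\<And>n. pn n \<in> ?V"
    and lim: "pn \<longlonglongrightarrow> p" using H by auto
  define good where "good n \<longleftrightarrow> (\<exists>k\<le>n. pn n k = p k)" for n
  define mm where "mm n = Max {k. k \<le> n \<and> pn n k = p k}" for n
  have mm_prop: "pn n (mm n) = p (mm n) \<and> k \<le> mm n" if "good n" "k \<le> n" "pn n k = p k" for n k
  proof -
    have fin: "finite {k. k \<le> n \<and> pn n k = p k}" by simp
    have ne: "{k. k \<le> n \<and> pn n k = p k} \<noteq> {}" using that unfolding good_def by blast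
    have "mm n \<in> {k. k \<le> n \<and> pn n k = p k}" unfolding mm_def by (rule Max_in[OF fin ne])
    moreover have "k \<le> mm n" unfolding mm_def by (rule Max_ge[OF fin]) (use that in auto)
    ultimately show ?thesis by simp
  qed
  define P where "P n L \<longleftrightarrow> L \<subseteq> ?V \<and> closed L \<and> g_connected ?E L \<and> pn n \<in> L \<and>
           (\<lambda>x. x (mm n)) ` L = (\<lambda>x. x (mm n)) ` K" for n L
  have exP: "\<exists>L. P n L" if gn: "good n" for n
  proof -
    obtain k where k: "k \<le> n" "pn n k = p k" using gn unfolding good_def by blast
    have "pn n (mm n) \<in> (\<lambda>x. x (mm n)) ` K" using mm_prop[OF gn k] pK by auto
    then show ?thesis unfolding P_def using build[OF KV Kc pnV] by blast
  qed
  define Kn where "Kn n = (if good n then (SOME L. P n L) else {pn n})" for n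
  have PKn: "P n (Kn n)" if "good n" for n
    unfolding Kn_def using that someI_ex[OF exP[OF that]] by simp
  show "\<exists>Kn. (\<forall>n. Kn n \<subseteq> ?V \<and> closedin (top_of_set ?V) (Kn n) \<and> g_connected ?E (Kn n) \<and> pn n \<in> Kn n) \<and>
          (\<lambda>n. hausdorff_dist d (Kn n) K) \<longlonglongrightarrow> 0"
  proof (rule exI[of _ Kn], rule conjI, rule allI)
    fix n
    show "Kn n \<subseteq> ?V \<and> closedin (top_of_set ?V) (Kn n) \<and> g_connected ?E (Kn n) \<and> pn n \<in> Kn n"
    proof (cases "good n")
      case True
      then show ?thesis using PKn[OF True] unfolding P_def by (auto intro: closed_subset)
    next
      case False
      have "{pn n} = (\<Inter>j. {y::nat\<Rightarrow>nat. y j = pn n j})" by auto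
      then have "closed {pn n}" using closed_coord by (auto intro!: closed_INT)
      then have "closedin (top_of_set ?V) {pn n}" by (rule closed_subset[rotated]) (use pnV in auto)
      then show ?thesis unfolding Kn_def using pnV[of n] gconn_single False by auto
    qed
  next
    show "(\<lambda>n. hausdorff_dist d (Kn n) K) \<longlonglongrightarrow> 0"
      unfolding tendsto_iff
    proof (intro allI impI)
      fix e :: real assume e: "e > 0"
      obtain N where N: "\<forall>x\<in>?V. \<forall>y\<in>?V. x N = y N \<longrightarrow> d x y < e / 2"
        using uniform[OF ms mt, of "e / 2"] e by auto
      have ev: "eventually (\<lambda>n. pn n N = p N \<and> N \<le> n) sequentially"
        using eventually_conj[OF tendsto_coord_eventually[OF lim, of N] eventually_ge_at_top[of N]] .
      show "eventually (\<lambda>n. dist (hausdorff_dist d (Kn n) K) 0 < e) sequentially"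
        using ev
      proof (rule eventually_mono)
        fix n assume n: "pn n N = p N \<and> N \<le> n"
        have g: "good n" using n unfolding good_def by blast
        have Nm: "N \<le> mm n" using mm_prop[OF g, of N] n by blast
        have PK: "P n (Kn n)" by (rule PKn[OF g])
        have KnV: "Kn n \<subseteq> ?V" and proj: "(\<lambda>x. x (mm n)) ` Kn n = (\<lambda>x. x (mm n)) ` K"
          and pnK: "pn n \<in> Kn n"
          using PK unfolding P_def by auto
        have close: "d a b < e / 2" if "a \<in> ?V" "b \<in> ?V" "a (mm n) = b (mm n)" for a b
        proof -
          have "a N = b N" by (rule thread_agree[of _ Fs \<alpha> _ "mm n"]) (use that Nm in auto)
          then show ?thesis using N that by blast
        qed
        have ab: "\<forall>a\<in>Kn n. \<exists>b\<in>K. d a b \<le> e / 2"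
        proof
          fix a assume a: "a \<in> Kn n"
          then have "a (mm n) \<in> (\<lambda>x. x (mm n)) ` K" using proj by blast
          then obtain b where b: "b \<in> K" "b (mm n) = a (mm n)" by auto
          have "a \<in> ?V" "b \<in> ?V" using a b KnV KV by auto
          then have "d a b < e / 2" using close[of a b] b by simp
          then show "\<exists>b\<in>K. d a b \<le> e / 2" using b by (meson less_imp_le)
        qed
        have ba: "\<forall>b\<in>K. \<exists>a\<in>Kn n. d a b \<le> e / 2"
        proof
          fix b assume b: "b \<in> K"
          then have "b (mm n) \<in> (\<lambda>x. x (mm n)) ` Kn n" using proj by blast
          then obtain a where a: "a \<in> Kn n" "a (mm n) = b (mm n)" by auto
          have "a \<in> ?V" "b \<in> ?V" using a b KnV KV by auto
          then have "d a b < e / 2" using close[of a b] a by simp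
          then show "\<exists>a\<in>Kn n. d a b \<le> e / 2" using a by (meson less_imp_le)
        qed
        have "0 \<le> hausdorff_dist d (Kn n) K \<and> hausdorff_dist d (Kn n) K \<le> e / 2"
          by (rule haus_le) (use pnK pK ab ba Metric_space.nonneg[OF ms] in auto)
        then show "dist (hausdorff_dist d (Kn n) K) 0 < e" using e by (simp add: dist_real_def)
      qed
    qed
  qed
qed

end

theorem proposition6p5:
  fixes G :: "fgraph set"
    and M :: "fgraph \<Rightarrow> fgraph \<Rightarrow> (nat \<Rightarrow> nat) \<Rightarrow> bool"
    and Fs :: "nat \<Rightarrow> fgraph"
    and \<alpha> :: "nat \<Rightarrow> nat \<Rightarrow> nat"
  assumes "proj_fraisse_family G M"
    and "\<forall>A\<in>G. g_connected (snd A) (fst A)"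
    and "\<forall>B A f. M B A f \<longrightarrow> confluent B A f"
    and "is_proj_fraisse_limit G M Fs \<alpha>"
  shows "kelley (inv_lim_V Fs \<alpha>) (inv_lim_E Fs \<alpha>)"
proof -
  have Mn: "M (Fs (Suc n)) (Fs n) (\<alpha> n)" for n
    using assms(4) unfolding is_proj_fraisse_limit_def by blast
  have pf1: "\<forall>A\<in>G. is_graph (fst A) (snd A) \<and> finite (fst A)"
    using assms(1) unfolding proj_fraisse_family_def by (rule conjunct1)
  have pf2: "\<forall>B A f. M B A f \<longrightarrow> B \<in> G \<and> A \<in> G \<and> epimorphism (fst B) (snd B) (fst A) (snd A) f"
    using assms(1) unfolding proj_fraisse_family_def by (rule conjunct1[OF conjunct2])
  have G: "Fs n \<in> G" for n
    using Mn[of n] pf2 by blast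
  have fin: "finite (fst (Fs n))" for n
    using G[of n] pf1 by blast
  have conf: "confluent (Fs (Suc n)) (Fs n) (\<alpha> n)" for n
    using Mn[of n] assms(3) by blast
  interpret invlim Fs \<alpha> by standard (auto simp: fin conf)
  have "g_connected (snd (Fs n)) (fst (Fs n))" for n using G[of n] assms(2) by blast
  then show ?thesis by (rule kelley_main)
qed

end
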